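(* Let $0<p<q<\infty$. Then the norm of the embedding operator $I\colon\ell^{p,q}\to\ell^{p,\infty}$ is $$\|I\|=\Big(\frac{q}{p}\Big)^{1/q}.$$
   Context: For a scalar sequence $a=(a_n)$, its decreasing rearrangement is $a^*_n=\inf\{\omega>0:\#\{k:|a_k|>\omega\}\le n-1\}$. For $p,q\in(0,\infty]$, the Lorentz sequence space $\ell^{p,q}$ consists of all sequences $a$ with $\|a\|_{p,q}<\infty$, where $\|a\|_{p,q}=\big(\sum_{n=1}^\infty (a_n^* )^q n^{q/p-1}\big)^{1/q}$ if $q<\infty$, and $\|a\|_{p,\infty}=\sup_{n}n^{1/p}a_n^*$. The operator norm is $\|I\|=\sup_{\|a\|_{p,q}\le1}\|a\|_{p,\infty}$. *)

theory Defs
  imports "HOL-Analysis.Analysis"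
begin

definition rearr_levels :: "(nat \<Rightarrow> real) \<Rightarrow> nat \<Rightarrow> real set" where
  "rearr_levels a n = {\<omega>. \<omega> > 0 \<and> finite {k. \<bar>a k\<bar> > \<omega>} \<and> card {k. \<bar>a k\<bar> > \<omega>} \<le> n - 1}"

text \<open>Decreasing rearrangement a*_n (n \<ge> 1); meaningful when rearr_levels a n is nonempty.\<close>
definition decr_rearr :: "(nat \<Rightarrow> real) \<Rightarrow> nat \<Rightarrow> real" where
  "decr_rearr a n = Inf (rearr_levels a n)"

definition lorentz_term :: "real \<Rightarrow> real \<Rightarrow> (nat \<Rightarrow> real) \<Rightarrow> nat \<Rightarrow> real" where
  "lorentz_term p q a n = (decr_rearr a n) powr q * (real n) powr (q / p - 1)"

definition in_lorentz :: "real \<Rightarrow> real \<Rightarrow> (nat \<Rightarrow> real) \<Rightarrow> bool" where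
  "in_lorentz p q a \<longleftrightarrow> (\<forall>n\<ge>1. rearr_levels a n \<noteq> {}) \<and> summable (\<lambda>n. lorentz_term p q a (n + 1))"

definition lorentz_norm :: "real \<Rightarrow> real \<Rightarrow> (nat \<Rightarrow> real) \<Rightarrow> real" where
  "lorentz_norm p q a = (\<Sum>n. lorentz_term p q a (n + 1)) powr (1 / q)"

definition weak_lorentz_norm :: "real \<Rightarrow> (nat \<Rightarrow> real) \<Rightarrow> ereal" where
  "weak_lorentz_norm p a = (SUP n\<in>{1..}. ereal ((real n) powr (1 / p) * decr_rearr a n))"

definition embedding_norm :: "real \<Rightarrow> real \<Rightarrow> ereal" where
  "embedding_norm p q = (SUP a\<in>{a. in_lorentz p q a \<and> lorentz_norm p q a \<le> 1}. weak_lorentz_norm p a)"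

end

theory Submission imports Defs begin

lemma mvt_pow:
  fixes r x :: real
  assumes r: "r \<ge> 1" and x: "x > 0"
  shows "r * x powr (r-1) \<le> (x+1) powr r - x powr r"
    and "(x+1) powr r - x powr r \<le> r * (x+1) powr (r-1)"
proof -
  have "\<exists>z. x < z \<and> z < x+1 \<and> (x+1) powr r - x powr r = ((x+1) - x) * (r * z powr (r-1))"
    apply (rule MVT2) using x by (auto intro!: derivative_eq_intros)
  then obtain z where z: "x < z" "z < x+1" "(x+1) powr r - x powr r = r * z powr (r-1)" by auto
  have "x powr (r-1) \<le> z powr (r-1)" using z x r by (intro powr_mono2) auto
  then show "r * x powr (r-1) \<le> (x+1) powr r - x powr r" using z r by simp
  have "z powr (r-1) \<le> (x+1) powr (r-1)" using z x r by (intro powr_mono2) auto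
  then show "(x+1) powr r - x powr r \<le> r * (x+1) powr (r-1)" using z r by simp
qed

lemma sum_lower:
  fixes r :: real assumes r: "r \<ge> 1"
  shows "real N powr r / r \<le> (\<Sum>n<N. real (n+1) powr (r-1))"
proof (induction N)
  case 0 then show ?case by simp
next
  case (Suc N)
  have "real (Suc N) powr r / r \<le> real N powr r / r + real (N+1) powr (r-1)"
  proof (cases "N = 0")
    case True then show ?thesis using r by simp
  next
    case False
    have "(real N + 1) powr r - real N powr r \<le> r * (real N+1) powr (r-1)"
      using mvt_pow(2)[OF r, of "real N"] False by simp
    then show ?thesis using r by (simp add: field_simps)
  qed
  then show ?case using Suc by simp
qed

lemma sum_upper:
  fixes r :: real assumes r: "r \<ge> 1"
  shows "(\<Sum>n<N. real (n+1) powr (r-1)) \<le> real (N+1) powr r / r"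
proof (induction N)
  case 0 then show ?case using r by simp
next
  case (Suc N)
  have h: "(real N+1) powr r + r * (real N+1) powr (r-1) \<le> (real N+1+1) powr r"
    using mvt_pow(1)[OF r, of "real N + 1"] by simp
  have "((real N+1) powr r + r * (real N+1) powr (r-1)) / r \<le> (real N+1+1) powr r / r"
    using divide_right_mono[OF h] r by simp
  hence "real (N+1) powr r / r + real (N+1) powr (r-1) \<le> real (N+2) powr r / r"
    using r by (simp add: add_divide_distrib add.commute)
  then show ?case using Suc by simp
qed

lemma lev_pos: "w \<in> rearr_levels a n \<Longrightarrow> w > 0"
  by (simp add: rearr_levels_def)

lemma bdd_lev: "bdd_below (rearr_levels a n)"
  by (rule bdd_belowI[of _ 0]) (auto simp: rearr_levels_def)

lemma decr_nonneg: "rearr_levels a n \<noteq> {} \<Longrightarrow> 0 \<le> decr_rearr a n"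
  unfolding decr_rearr_def by (rule cInf_greatest) (auto dest: lev_pos)

lemma decr_mono:
  assumes "m \<le> n" "rearr_levels a m \<noteq> {}"
  shows "decr_rearr a n \<le> decr_rearr a m"
proof -
  have "rearr_levels a m \<subseteq> rearr_levels a n"
    using assms(1) by (auto simp: rearr_levels_def)
  then show ?thesis unfolding decr_rearr_def
    using cInf_superset_mono[OF assms(2) bdd_lev] by blast
qed

lemma term_nonneg:
  assumes "rearr_levels a n \<noteq> {}"
  shows "0 \<le> lorentz_term p q a n"
  unfolding lorentz_term_def by simp

lemma upper:
  fixes p q :: real
  assumes p: "0 < p" and pq: "p < q" and a: "in_lorentz p q a" and nrm: "lorentz_norm p q a \<le> 1"
    and N: "N \<ge> 1"
  shows "real N powr (1/p) * decr_rearr a N \<le> (q/p) powr (1/q)"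
proof -
  define r where "r = q/p"
  have r: "r \<ge> 1" using p pq by (simp add: r_def)
  have q: "q > 0" using p pq by simp
  define d where "d = decr_rearr a N"
  have ne: "\<And>n. n \<ge> 1 \<Longrightarrow> rearr_levels a n \<noteq> {}" using a by (simp add: in_lorentz_def)
  have d0: "0 \<le> d" unfolding d_def using ne N by (simp add: decr_nonneg)
  have summ: "summable (\<lambda>n. lorentz_term p q a (n + 1))" using a by (simp add: in_lorentz_def)
  have tnn: "\<And>n. 0 \<le> lorentz_term p q a (n+1)" by (simp add: lorentz_term_def)
  have s0: "0 \<le> (\<Sum>n. lorentz_term p q a (n + 1))" using summ tnn by (simp add: suminf_nonneg)
  have s1: "(\<Sum>n. lorentz_term p q a (n + 1)) \<le> 1"
  proof -
    have "(\<Sum>n. lorentz_term p q a (n + 1)) = ((\<Sum>n. lorentz_term p q a (n + 1)) powr (1/q)) powr q"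
      using s0 q by (simp add: powr_powr)
    also have "\<dots> \<le> 1 powr q" using nrm q
      by (intro powr_mono2) (auto simp: lorentz_norm_def)
    finally show ?thesis by simp
  qed
  have "(\<Sum>n<N. d powr q * real (n+1) powr (r-1)) \<le> (\<Sum>n<N. lorentz_term p q a (n + 1))"
  proof (rule sum_mono)
    fix n assume "n \<in> {..<N}"
    hence "decr_rearr a N \<le> decr_rearr a (n+1)" using ne by (intro decr_mono) auto
    hence "d powr q \<le> decr_rearr a (n+1) powr q" using d0 q unfolding d_def by (intro powr_mono2) auto
    then show "d powr q * real (n+1) powr (r-1) \<le> lorentz_term p q a (n + 1)"
      unfolding lorentz_term_def r_def by (intro mult_right_mono) auto
  qed
  also have "\<dots> \<le> (\<Sum>n. lorentz_term p q a (n + 1))"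
    using summ tnn by (intro sum_le_suminf) auto
  finally have "d powr q * (\<Sum>n<N. real (n+1) powr (r-1)) \<le> 1"
    using s1 by (simp add: sum_distrib_left)
  moreover have "d powr q * (real N powr r / r) \<le> d powr q * (\<Sum>n<N. real (n+1) powr (r-1))"
    using sum_lower[OF r] by (intro mult_left_mono) auto
  ultimately have "d powr q * (real N powr r / r) \<le> 1" by linarith
  hence "d powr q * real N powr r \<le> r" using r by (simp add: field_simps)
  hence "(d powr q * real N powr r) powr (1/q) \<le> r powr (1/q)"
    using q by (intro powr_mono2) auto
  moreover have "(d powr q * real N powr r) powr (1/q) = real N powr (1/p) * d"
    using q p d0 by (simp add: powr_mult powr_powr r_def)
  ultimately show ?thesis by (simp add: d_def r_def)
qed

lemma lower:
  fixes p q :: real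
  assumes p: "0 < p" and pq: "p < q" and N: "N \<ge> 1"
  shows "\<exists>a. in_lorentz p q a \<and> lorentz_norm p q a \<le> 1 \<and>
     (q/p) powr (1/q) * real N powr (1/p) / real (N+1) powr (1/p) \<le> real N powr (1/p) * decr_rearr a N"
proof -
  define r where "r = q/p"
  have r: "r \<ge> 1" using p pq by (simp add: r_def)
  have q: "q > 0" using p pq by simp
  define S where "S = (\<Sum>n<N. real (n+1) powr (r-1))"
  have S0: "S > 0" unfolding S_def using N by (intro sum_pos2[of "{..<N}" 0]) auto
  define c where "c = S powr (-1/q)"
  have c0: "c > 0" using S0 by (simp add: c_def)
  define a where "a = (\<lambda>k::nat. if k < N then c else 0)"
  have cin: "c \<in> rearr_levels a n" for n
    using c0 by (auto simp: rearr_levels_def a_def)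
  have ne: "rearr_levels a n \<noteq> {}" for n using cin by blast
  have dle: "decr_rearr a n \<le> c" for n
    unfolding decr_rearr_def using cin bdd_lev by (rule cInf_lower)
  have dz: "decr_rearr a n = 0" if "n > N" for n
  proof -
    have "decr_rearr a n \<le> w" if w: "w > 0" for w
    proof -
      have "{k. \<bar>a k\<bar> > w} \<subseteq> {..<N}" using w by (auto simp: a_def split: if_splits)
      hence "finite {k. \<bar>a k\<bar> > w}" "card {k. \<bar>a k\<bar> > w} \<le> N"
        using finite_subset[of _ "{..<N}"] card_mono[of "{..<N}"] by auto
      hence "w \<in> rearr_levels a n" using w \<open>n > N\<close> by (auto simp: rearr_levels_def)
      then show ?thesis unfolding decr_rearr_def using bdd_lev by (rule cInf_lower)
    qed
    hence le: "\<And>w. w > 0 \<Longrightarrow> decr_rearr a n \<le> w" .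
    have "decr_rearr a n \<le> 0"
    proof (rule ccontr)
      assume h: "\<not> decr_rearr a n \<le> 0"
      hence "decr_rearr a n \<le> decr_rearr a n / 2" using le[of "decr_rearr a n / 2"] by linarith
      then show False using h by linarith
    qed
    with decr_nonneg[OF ne, of n] show ?thesis by linarith
  qed
  have dge: "c \<le> decr_rearr a N"
    unfolding decr_rearr_def
  proof (rule cInf_greatest[OF ne])
    fix w assume w: "w \<in> rearr_levels a N"
    show "c \<le> w"
    proof (rule ccontr)
      assume "\<not> c \<le> w"
      hence wc: "w < c" by simp
      have wp: "w > 0" using lev_pos[OF w] .
      have iff: "(\<bar>a k\<bar> > w) = (k < N)" for k
        using wc wp c0 unfolding a_def by (cases "k < N") simp_all
      have "{k. \<bar>a k\<bar> > w} = {..<N}" using iff by blast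
      then have "card {..<N} \<le> N - 1" using w unfolding rearr_levels_def by simp
      then show False using N by simp
    qed
  qed
  have tz: "lorentz_term p q a (n+1) = 0" if "n \<notin> {..<N}" for n
    using that q by (simp add: lorentz_term_def dz)
  have summ: "summable (\<lambda>n. lorentz_term p q a (n + 1))"
    by (rule summable_finite[of "{..<N}"]) (use tz in auto)
  have in_l: "in_lorentz p q a" using summ ne by (simp add: in_lorentz_def)
  have "(\<Sum>n. lorentz_term p q a (n + 1)) = (\<Sum>n<N. lorentz_term p q a (n + 1))"
    by (rule suminf_finite) (use tz in auto)
  also have "\<dots> \<le> (\<Sum>n<N. c powr q * real (n+1) powr (r-1))"
  proof (rule sum_mono)
    fix n assume "n \<in> {..<N}"
    have "decr_rearr a (n+1) powr q \<le> c powr q" using dle decr_nonneg[OF ne] q by (intro powr_mono2) auto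
    then show "lorentz_term p q a (n + 1) \<le> c powr q * real (n+1) powr (r-1)"
      unfolding lorentz_term_def r_def by (intro mult_right_mono) auto
  qed
  also have "\<dots> = c powr q * S" by (simp add: S_def sum_distrib_left)
  also have "\<dots> = 1"
  proof -
    have "c powr q = S powr (-1)" using q by (simp add: c_def powr_powr)
    also have "\<dots> = inverse S" using S0 by (simp add: powr_minus)
    finally show ?thesis using S0 by simp
  qed
  finally have s1: "(\<Sum>n. lorentz_term p q a (n + 1)) \<le> 1" .
  have s0: "0 \<le> (\<Sum>n. lorentz_term p q a (n + 1))"
    using summ by (intro suminf_nonneg) (auto simp: lorentz_term_def)
  have "lorentz_norm p q a \<le> 1 powr (1/q)"
    unfolding lorentz_norm_def using q s0 s1 by (intro powr_mono2) auto
  hence nrm: "lorentz_norm p q a \<le> 1" by simp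
  have "S powr (1/q) \<le> (real (N+1) powr r / r) powr (1/q)"
    using sum_upper[OF r, of N] S0 q by (intro powr_mono2) (auto simp: S_def)
  also have "\<dots> = real (N+1) powr (1/p) / r powr (1/q)"
  proof -
    have e: "r * (1/q) = 1/p" using q p by (simp add: r_def)
    show ?thesis by (simp only: powr_divide powr_powr e)
  qed
  finally have AB: "S powr (1/q) \<le> real (N+1) powr (1/p) / r powr (1/q)" .
  have Ap: "S powr (1/q) > 0" using S0 by simp
  have Bp: "real (N+1) powr (1/p) > 0" by simp
  have Rp: "r powr (1/q) > 0" using r by simp
  have "r powr (1/q) / real (N+1) powr (1/p) \<le> 1 / S powr (1/q)"
    using AB Ap Bp Rp by (simp add: field_simps)
  also have "\<dots> = c" using S0 by (simp add: c_def powr_minus_divide)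
  also have "\<dots> \<le> decr_rearr a N" by (rule dge)
  finally have "r powr (1/q) / real (N+1) powr (1/p) * real N powr (1/p) \<le> decr_rearr a N * real N powr (1/p)"
    by (intro mult_right_mono) auto
  then have "(q/p) powr (1/q) * real N powr (1/p) / real (N+1) powr (1/p) \<le> real N powr (1/p) * decr_rearr a N"
    by (simp add: r_def mult.commute[of "decr_rearr a N"])
  then show ?thesis using in_l nrm by blast
qed

theorem mainTheorem10:
  fixes p q :: real
  assumes "0 < p" and "p < q"
  shows "embedding_norm p q = ereal ((q / p) powr (1 / q))"
proof (rule antisym)
  define L where "L = (q / p) powr (1 / q)"
  show "embedding_norm p q \<le> ereal ((q / p) powr (1 / q))"
    unfolding embedding_norm_def weak_lorentz_norm_def
    by (intro SUP_least) (use upper[OF assms] in auto)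
  define g where "g = (\<lambda>N::nat. L * (real N / real (Suc N)) powr (1/p))"
  have gle: "ereal (g N) \<le> embedding_norm p q" if N: "N \<ge> 1" for N
  proof -
    obtain a where a: "in_lorentz p q a" "lorentz_norm p q a \<le> 1"
      and le: "(q/p) powr (1/q) * real N powr (1/p) / real (N+1) powr (1/p) \<le> real N powr (1/p) * decr_rearr a N"
      using lower[OF assms N] by blast
    have "g N = (q/p) powr (1/q) * real N powr (1/p) / real (N+1) powr (1/p)"
      by (simp add: g_def L_def powr_divide)
    hence "ereal (g N) \<le> ereal (real N powr (1/p) * decr_rearr a N)" using le by simp
    also have "\<dots> \<le> weak_lorentz_norm p a"
      unfolding weak_lorentz_norm_def using N by (intro SUP_upper) auto
    also have "\<dots> \<le> embedding_norm p q"
      unfolding embedding_norm_def using a by (intro SUP_upper) auto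
    finally show ?thesis .
  qed
  have "(\<lambda>N. (real N / real (Suc N)) powr (1/p)) \<longlonglongrightarrow> 1 powr (1/p)"
    by (intro tendsto_powr LIMSEQ_n_over_Suc_n tendsto_const) auto
  hence "g \<longlonglongrightarrow> L" unfolding g_def using tendsto_mult_left by fastforce
  hence "(\<lambda>N. ereal (g N)) \<longlonglongrightarrow> ereal L" by (rule tendsto_ereal)
  hence "ereal L \<le> embedding_norm p q"
    by (rule Lim_bounded[where M=1]) (use gle in auto)
  then show "ereal ((q / p) powr (1 / q)) \<le> embedding_norm p q" by (simp add: L_def)
qed

end
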